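(* Fix $L\in\mathbb Z$ and work on $Y_L=\mathbb R\times(0,2^L]\times\mathbb R$ with the objects described in the context. The function $\mathcal C(A)=\mathcal M(\mathcal N(\mathcal Q(A)))$, $A\subseteq Y_L$, with $\mathcal E=\mathcal D_L$, is a $\mu$-covering function with parameter $\Phi$ for every $\Phi\ge2$.
   Context: Dyadic intervals $I(m,l)=(2^lm,2^l(m+1)]$; tiles $H(m,l,n)=I(m,l)\times(2^{l-1},2^l]\times I(n,-l)$. $\mathcal D_L$ = strips $D(m,l)=I(m,l)\times(0,2^l]\times\mathbb R$ with $l\le L$, $\sigma(D(m,l))=2^l$. $\mathcal T_L$ = trees $T(m,l,n)=\bigcup_{l'\le l}\bigcup_{m':\,I(m',l')\subseteq I(m,l)}H(m',l',N(n,l'))$ with $l\le L$ ($N(n,l')$ the integer with $I(n,-l)\subseteq I(N(n,l'),-l')$), $\tau(T(m,l,n))=2^l$. Outer measures on $Y_L$: $\mu(A)=\inf\{\sum_{S\in\mathcal S'}\sigma(S):\mathcal S'\subseteq\mathcal D_L,A\subseteq\bigcup\mathcal S'\}$, $\nu$ likewise from $(\mathcal T_L,\tau)$. $\pi$ = projection onto first coordinate, $|\cdot|$ Lebesgue measure. For $E\in\mathcal D_L$, $E_+=\{(x,s,\xi)\in E:s>\sigma(E)/2\}$. $\mathcal Q(A)=\{E\in\mathcal D_L:E_+\cap A\ne\varnothing\}$. For $\mathcal D_1\subseteq\mathcal D_L$: $\mathcal N(\mathcal D_1)=\{E\in\mathcal D_L:|\pi(E)\cap\pi(\bigcup\mathcal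 D_1)|\ge|\pi(E)|/2\}$, and $\mathcal M(\mathcal D_1)$ is the subcollection of elements of $\mathcal D_1$ maximal with respect to inclusion. A $\mu$-covering function with parameter $\Phi$: a map $\mathcal C$ assigning to each $A$ a subcollection of pairwise disjoint elements of $\mathcal E$ such that $\mathbf B_{\mathcal C}(A)=\bigcup_{E\in\mathcal C(A)}E$ satisfies $A\subseteq\mathbf B_{\mathcal C}(A)$, $\mu(\mathbf B_{\mathcal C}(A))\le\Phi\mu(A)$, and $A_1\subseteq A_2\Rightarrow\mathbf B_{\mathcal C}(A_1)\subseteq\mathbf B_{\mathcal C}(A_2)$. *)

theory Defs
  imports "HOL-Analysis.Analysis"
begin

text \<open>Points (x, s, xi) of the upper half space.\<close>
type_synonym point = "real \<times> real \<times> real"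

definition dyadic_interval :: "int \<Rightarrow> int \<Rightarrow> real set" where
  "dyadic_interval m l =
     {2 powr of_int l * of_int m <.. 2 powr of_int l * (of_int m + 1)}"

definition strip :: "int \<Rightarrow> int \<Rightarrow> point set" where
  "strip m l = dyadic_interval m l \<times> {0<..2 powr of_int l} \<times> (UNIV :: real set)"

definition strips :: "int \<Rightarrow> point set set" where
  "strips L = {strip m l | m l. l \<le> L}"

definition sigma :: "point set \<Rightarrow> real" where
  "sigma E = (THE s. \<exists>m l. E = strip m l \<and> s = 2 powr of_int l)"

definition Y :: "int \<Rightarrow> point set" where
  "Y L = (UNIV :: real set) \<times> {0<..2 powr of_int L} \<times> (UNIV :: real set)"

definition sum_sigma :: "point set set \<Rightarrow> ennreal" where
  "sum_sigma S = (SUP F\<in>{F. finite F \<and> F \<subseteq> S}. \<Sum>E\<in>F. ennreal (sigma E))"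

definition mu :: "int \<Rightarrow> point set \<Rightarrow> ennreal" where
  "mu L A = (INF S\<in>{S. S \<subseteq> strips L \<and> A \<subseteq> \<Union>S}. sum_sigma S)"

definition upper_half :: "point set \<Rightarrow> point set" where
  "upper_half E = {p \<in> E. fst (snd p) > sigma E / 2}"

definition Qcal :: "int \<Rightarrow> point set \<Rightarrow> point set set" where
  "Qcal L A = {E \<in> strips L. upper_half E \<inter> A \<noteq> {}}"

definition Ncal :: "int \<Rightarrow> point set set \<Rightarrow> point set set" where
  "Ncal L D1 = {E \<in> strips L.
      emeasure lborel (fst ` E \<inter> fst ` (\<Union>D1)) \<ge> emeasure lborel (fst ` E) / 2}"

definition Mcal :: "point set set \<Rightarrow> point set set" where
  "Mcal D1 = {E \<in> D1. \<not> (\<exists>E'\<in>D1. E \<subset> E')}"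

definition covering_function :: "int \<Rightarrow> (point set \<Rightarrow> point set set) \<Rightarrow> real \<Rightarrow> bool" where
  "covering_function L C \<Phi> \<longleftrightarrow>
     (\<forall>A. A \<subseteq> Y L \<longrightarrow>
        C A \<subseteq> strips L \<and> pairwise disjnt (C A) \<and> A \<subseteq> \<Union>(C A) \<and>
        mu L (\<Union>(C A)) \<le> ennreal \<Phi> * mu L A) \<and>
     (\<forall>A1 A2. A1 \<subseteq> A2 \<longrightarrow> A2 \<subseteq> Y L \<longrightarrow> \<Union>(C A1) \<subseteq> \<Union>(C A2))"

end

theory Submission
  imports Defs
begin

lemma pl:
  fixes l l' :: int assumes "l \<le> l'"
  shows "2 powr (of_int l'::real) = 2 powr (of_int l) * of_int ((2::int) ^ nat (l' - l))"
proof -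
  have e: "(of_int l'::real) = of_int l + real (nat (l' - l))" using assms by simp
  have "2 powr (of_int l'::real) = 2 powr (of_int l) * 2 powr real (nat (l' - l))"
    unfolding e by (rule powr_add)
  also have "2 powr real (nat (l' - l)) = (2::real) ^ nat (l' - l)"
    by (rule powr_realpow) simp
  finally show ?thesis by simp
qed

lemma di_mem: "x \<in> dyadic_interval m l \<longleftrightarrow>
   2 powr of_int l * of_int m < x \<and> x \<le> 2 powr of_int l * (of_int m + 1)"
  by (simp add: dyadic_interval_def)

lemma di_nest:
  assumes "l \<le> l'" "x \<in> dyadic_interval m l" "x \<in> dyadic_interval m' l'"
  shows "dyadic_interval m l \<subseteq> dyadic_interval m' l'"
proof
  define a where "a = 2 powr (of_int l::real)"
  define q where "q = (2::int) ^ nat (l' - l)"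
  have a: "a > 0" by (simp add: a_def)
  have pl': "2 powr (of_int l'::real) = a * of_int q"
    unfolding a_def q_def by (rule pl[OF assms(1)])
  have x1: "a * of_int m < x" "x \<le> a * (of_int m + 1)" using assms(2) unfolding di_mem a_def by auto
  have x2: "a * of_int q * of_int m' < x" "x \<le> a * of_int q * (of_int m' + 1)"
    using assms(3) unfolding di_mem pl' by auto
  have "a * (of_int q * of_int m') < a * (of_int m + 1)" using x1 x2 by (simp only: mult.assoc)
  then have "of_int q * of_int m' < (of_int m + 1::real)" using a by (simp only: mult_less_cancel_left_pos)
  then have "of_int (q * m') < (of_int (m + 1)::real)" by simp
  then have i1: "q * m' \<le> m" by (simp only: of_int_less_iff)
  have "a * of_int m < a * (of_int q * (of_int m' + 1))" using x1 x2 by (simp only: mult.assoc)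
  then have "of_int m < (of_int q * (of_int m' + 1)::real)" using a by (simp only: mult_less_cancel_left_pos)
  then have "of_int m < (of_int (q * (m' + 1))::real)" by simp
  then have i2: "m + 1 \<le> q * (m' + 1)" by (simp only: of_int_less_iff)
  fix y assume "y \<in> dyadic_interval m l"
  then have y: "a * of_int m < y" "y \<le> a * (of_int m + 1)" unfolding di_mem a_def by auto
  have "(of_int (q * m')::real) \<le> of_int m" using i1 by (simp only: of_int_le_iff)
  then have "a * (of_int q * of_int m') \<le> a * of_int m" using a by simp
  moreover have "(of_int (m+1)::real) \<le> of_int (q * (m' + 1))" using i2 by (simp only: of_int_le_iff)
  then have "a * (of_int m + 1) \<le> a * (of_int q * (of_int m' + 1))" using a by simp
  ultimately show "y \<in> dyadic_interval m' l'" using y unfolding di_mem pl' by (simp add: mult.assoc)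
qed


lemma strip_mem: "p \<in> strip m l \<longleftrightarrow> fst p \<in> dyadic_interval m l \<and> 0 < fst (snd p) \<and> fst (snd p) \<le> 2 powr of_int l"
  by (cases p) (auto simp: strip_def)

lemma di_upper: "2 powr of_int l * (of_int m + 1) \<in> dyadic_interval m l"
  unfolding di_mem by simp

lemma strip_ne: "strip m l \<noteq> {}"
  unfolding strip_def using di_upper[of l m] by auto

lemma fst_strip: "fst ` strip m l = dyadic_interval m l"
  unfolding strip_def by simp

lemma strip_sub_level: assumes "strip m l \<subseteq> strip m' l'" shows "l \<le> l'"
proof -
  have "(2 powr of_int l * (of_int m + 1), 2 powr of_int l, 0::real) \<in> strip m l"
    unfolding strip_mem using di_upper by simp
  then have "(2 powr of_int l * (of_int m + 1), 2 powr of_int l, 0::real) \<in> strip m' l'" using assms by blast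
  then have "(2::real) powr of_int l \<le> 2 powr of_int l'" by (simp add: strip_mem)
  then show ?thesis by simp
qed

lemma strip_eq_level: "strip m l = strip m' l' \<Longrightarrow> l = l'"
  using strip_sub_level by (metis order_antisym order_refl)

lemma sigma_strip: "sigma (strip m l) = 2 powr of_int l"
  unfolding sigma_def
  by (rule the_equality) (auto dest: strip_eq_level)

lemma strips_iff: "strip m l \<in> strips L \<longleftrightarrow> l \<le> L"
  unfolding strips_def by (auto dest: strip_eq_level)

lemma strips_obtain: assumes "E \<in> strips L" obtains m l where "E = strip m l" "l \<le> L"
  using assms unfolding strips_def by auto

lemma strip_nest: assumes "l \<le> l'" "strip m l \<inter> strip m' l' \<noteq> {}"
  shows "strip m l \<subseteq> strip m' l'"
proof -
  obtain p where p: "p \<in> strip m l" "p \<in> strip m' l'" using assms(2) by auto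
  have sub: "dyadic_interval m l \<subseteq> dyadic_interval m' l'"
    using di_nest[OF assms(1)] p unfolding strip_mem by blast
  have le: "(2::real) powr of_int l \<le> 2 powr of_int l'" using assms(1) by simp
  show ?thesis
  proof
    fix q assume "q \<in> strip m l"
    then have "fst q \<in> dyadic_interval m l" "0 < fst (snd q)" "fst (snd q) \<le> 2 powr of_int l"
      by (auto simp: strip_mem)
    moreover have "fst (snd q) \<le> 2 powr of_int l'" using calculation(3) le by linarith
    ultimately show "q \<in> strip m' l'" using sub unfolding strip_mem by blast
  qed
qed

lemma strip_cases: assumes "strip m l \<inter> strip m' l' \<noteq> {}"
  shows "strip m l \<subseteq> strip m' l' \<or> strip m' l' \<subseteq> strip m l"
  using assms strip_nest by (metis inf_commute linear)

lemma strip_fst_meet: assumes "x \<in> dyadic_interval m l" "x \<in> dyadic_interval m' l'"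
  shows "strip m l \<inter> strip m' l' \<noteq> {}"
proof -
  have "(x, min (2 powr of_int l) (2 powr of_int l'), 0::real) \<in> strip m l \<inter> strip m' l'"
    using assms by (simp add: strip_mem)
  then show ?thesis by blast
qed


lemma max_above:
  assumes D: "D \<subseteq> strips L" and "E \<in> D"
  shows "\<exists>E'\<in>Mcal D. E \<subseteq> E'"
proof -
  obtain m l where E: "E = strip m l" "l \<le> L" using assms strips_obtain by blast
  define K where "K = {l'. \<exists>m'. strip m' l' \<in> D \<and> E \<subseteq> strip m' l'}"
  have "K \<subseteq> {l..L}"
  proof
    fix l' assume "l' \<in> K"
    then obtain m' where "strip m' l' \<in> D" "E \<subseteq> strip m' l'" unfolding K_def by blast
    then show "l' \<in> {l..L}" using E D strip_sub_level strips_iff by auto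
  qed
  then have fK: "finite K" by (rule finite_subset) simp
  have "l \<in> K" unfolding K_def using E assms by blast
  then have "Max K \<in> K" using fK by (intro Max_in) auto
  then obtain m0 where m0: "strip m0 (Max K) \<in> D" "E \<subseteq> strip m0 (Max K)" unfolding K_def by blast
  have "strip m0 (Max K) \<in> Mcal D"
    unfolding Mcal_def
  proof (intro CollectI conjI notI m0)
    assume "\<exists>E'\<in>D. strip m0 (Max K) \<subset> E'"
    then obtain E'' where E'': "E'' \<in> D" "strip m0 (Max K) \<subset> E''" by blast
    then obtain m'' l'' where e: "E'' = strip m'' l''" using D strips_obtain by blast
    have "l'' \<in> K" unfolding K_def using E'' e m0 by blast
    then have "l'' \<le> Max K" using fK by simp
    moreover have "Max K \<le> l''" using E'' e strip_sub_level by blast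
    ultimately have "l'' = Max K" by simp
    moreover have "strip m0 (Max K) \<inter> strip m'' l'' \<noteq> {}" using E'' e strip_ne by blast
    ultimately have "strip m'' l'' \<subseteq> strip m0 (Max K)" using strip_nest[of l'' "Max K" m'' m0] by (simp add: inf_commute)
    then show False using E'' e by blast
  qed
  then show ?thesis using m0 by blast
qed

lemma Mcal_sub: "Mcal D \<subseteq> D" unfolding Mcal_def by blast

lemma Union_Mcal: assumes "D \<subseteq> strips L" shows "\<Union>(Mcal D) = \<Union>D"
proof
  show "\<Union>(Mcal D) \<subseteq> \<Union>D" using Mcal_sub by blast
  show "\<Union>D \<subseteq> \<Union>(Mcal D)"
  proof
    fix p assume "p \<in> \<Union>D"
    then obtain E where "E \<in> D" "p \<in> E" by blast
    then obtain E' where "E' \<in> Mcal D" "E \<subseteq> E'" using max_above[OF assms] by blast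
    then show "p \<in> \<Union>(Mcal D)" using \<open>p \<in> E\<close> by blast
  qed
qed

lemma Mcal_fst_disj:
  assumes D: "D \<subseteq> strips L" and E: "E1 \<in> Mcal D" "E2 \<in> Mcal D" "E1 \<noteq> E2"
  shows "fst ` E1 \<inter> fst ` E2 = {}"
proof (rule ccontr)
  assume "fst ` E1 \<inter> fst ` E2 \<noteq> {}"
  then obtain x where x: "x \<in> fst ` E1" "x \<in> fst ` E2" by blast
  have inD: "E1 \<in> D" "E2 \<in> D" using E Mcal_sub by blast+
  then have "E1 \<in> strips L" "E2 \<in> strips L" using D by blast+
  obtain m1 l1 where e1: "E1 = strip m1 l1" using strips_obtain[OF \<open>E1 \<in> strips L\<close>] by blast
  obtain m2 l2 where e2: "E2 = strip m2 l2" using strips_obtain[OF \<open>E2 \<in> strips L\<close>] by blast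
  have "x \<in> dyadic_interval m1 l1" "x \<in> dyadic_interval m2 l2" using x e1 e2 fst_strip by simp_all
  then have "E1 \<inter> E2 \<noteq> {}" unfolding e1 e2 by (rule strip_fst_meet)
  then have "E1 \<subseteq> E2 \<or> E2 \<subseteq> E1" unfolding e1 e2 by (rule strip_cases)
  then have "E1 \<subset> E2 \<or> E2 \<subset> E1" using E(3) by blast
  moreover have "\<not> (\<exists>E'\<in>D. E1 \<subset> E')" "\<not> (\<exists>E'\<in>D. E2 \<subset> E')"
    using E(1,2) unfolding Mcal_def by blast+
  ultimately show False using inD by blast
qed

lemma Mcal_disj:
  assumes D: "D \<subseteq> strips L" shows "pairwise disjnt (Mcal D)"
  unfolding pairwise_def disjnt_def
proof (intro ballI impI)
  fix E1 E2 assume "E1 \<in> Mcal D" "E2 \<in> Mcal D" "E1 \<noteq> E2"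
  then have "fst ` E1 \<inter> fst ` E2 = {}" using Mcal_fst_disj D by blast
  then show "E1 \<inter> E2 = {}" by blast
qed


lemma di_sets: "dyadic_interval m l \<in> sets lborel"
  unfolding dyadic_interval_def by simp

lemma di_meas: "emeasure lborel (dyadic_interval m l) = ennreal (2 powr of_int l)"
proof -
  have "2 powr of_int l * of_int m \<le> 2 powr of_int l * (of_int m + (1::real))" by simp
  then show ?thesis unfolding dyadic_interval_def by (simp add: algebra_simps)
qed

lemma countable_strips: "countable (strips L)"
proof -
  have "strips L \<subseteq> (\<lambda>(m,l). strip m l) ` UNIV" unfolding strips_def by auto
  moreover have "countable ((\<lambda>(m,l). strip m l) ` (UNIV :: (int \<times> int) set))" by simp
  ultimately show ?thesis by (rule countable_subset)
qed

lemma strip_fst_sets: "E \<in> strips L \<Longrightarrow> fst ` E \<in> sets lborel"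
  by (auto elim!: strips_obtain simp: fst_strip dyadic_interval_def)

lemma fst_Union_sets: assumes "D \<subseteq> strips L" shows "fst ` \<Union>D \<in> sets lborel"
proof -
  have "fst ` \<Union>D = (\<Union>E\<in>D. fst ` E)" by auto
  moreover have "countable D" using assms countable_strips countable_subset by blast
  ultimately show ?thesis using assms strip_fst_sets by (auto intro!: sets.countable_UN'')
qed

lemma emeasure_UN_le_SUP:
  fixes X :: "'i \<Rightarrow> 'a set"
  assumes I: "countable I" and X: "\<And>i. i \<in> I \<Longrightarrow> X i \<in> sets M"
  shows "emeasure M (\<Union>i\<in>I. X i) \<le> (SUP F\<in>{F. finite F \<and> F \<subseteq> I}. \<Sum>i\<in>F. emeasure M (X i))"
proof (cases "I = {}")
  case True then show ?thesis by simp
next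
  case False
  define f where "f = from_nat_into I"
  have rf: "range f = I" unfolding f_def using range_from_nat_into[OF False I] .
  define Y where "Y n = (\<Union>i\<in>f ` {..<n}. X i)" for n
  have U: "(\<Union>i\<in>I. X i) = (\<Union>n. Y n)"
  proof
    show "(\<Union>i\<in>I. X i) \<subseteq> (\<Union>n. Y n)"
    proof
      fix x assume "x \<in> (\<Union>i\<in>I. X i)"
      then obtain i where "i \<in> I" "x \<in> X i" by blast
      then obtain k where "i = f k" using rf by blast
      then have "x \<in> Y (Suc k)" unfolding Y_def using \<open>x \<in> X i\<close> by blast
      then show "x \<in> (\<Union>n. Y n)" by blast
    qed
    show "(\<Union>n. Y n) \<subseteq> (\<Union>i\<in>I. X i)" unfolding Y_def using rf by blast
  qed
  have inc: "incseq Y" by (rule incseq_SucI) (auto simp: Y_def lessThan_Suc)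
  have fs: "f ` {..<n} \<subseteq> I" for n using rf by blast
  have rs: "range Y \<subseteq> sets M" unfolding Y_def using fs X
    by (auto intro!: sets.finite_UN)
  have "emeasure M (\<Union>n. Y n) = (SUP n. emeasure M (Y n))"
    using SUP_emeasure_incseq[OF rs inc] by simp
  also have "\<dots> \<le> (SUP F\<in>{F. finite F \<and> F \<subseteq> I}. \<Sum>i\<in>F. emeasure M (X i))"
  proof (rule SUP_least)
    fix n
    have "emeasure M (Y n) \<le> (\<Sum>i\<in>f ` {..<n}. emeasure M (X i))"
      unfolding Y_def using fs X by (intro emeasure_subadditive_finite) auto
    also have "\<dots> \<le> (SUP F\<in>{F. finite F \<and> F \<subseteq> I}. \<Sum>i\<in>F. emeasure M (X i))"
      using fs by (intro SUP_upper) auto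
    finally show "emeasure M (Y n) \<le> \<dots>" .
  qed
  finally show ?thesis using U by simp
qed

lemma two_div: "(x::ennreal) * 2 / 2 = x"
  by (rule mult_divide_eq_ennreal) simp_all
lemma h1: assumes "(x::ennreal) \<le> 2 * y" shows "x / 2 \<le> y"
proof -
  have "x / 2 \<le> (y * 2) / 2" using assms by (intro divide_right_mono_ennreal) (simp add: mult.commute)
  then show ?thesis by (simp only: two_div)
qed
lemma h2: assumes "(x::ennreal) / 2 \<le> y" shows "x \<le> 2 * y"
proof -
  have "2 * (x / 2) \<le> 2 * y" using assms by (rule mult_left_mono) simp
  moreover have "2 * (x / 2) = x" by (simp only: ennreal_times_divide mult.commute[of 2 x] two_div)
  ultimately show ?thesis by simp
qed

lemma cover_pt:
  assumes "p \<in> Y L"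
  shows "\<exists>m l. l \<le> L \<and> p \<in> upper_half (strip m l)"
proof -
  obtain x s xi where p: "p = (x, s, xi)" by (cases p) auto
  have s: "0 < s" "s \<le> 2 powr of_int L" using assms unfolding p Y_def by auto
  define l where "l = \<lceil>log 2 s\<rceil>"
  define a where "a = 2 powr (of_int l::real)"
  define m where "m = \<lceil>x / a\<rceil> - 1"
  have a: "a > 0" unfolding a_def by simp
  have sl: "s = 2 powr (log 2 s)" using s by simp
  have "log 2 s \<le> of_int l" unfolding l_def by simp
  then have "2 powr (log 2 s) \<le> a" unfolding a_def by simp
  then have s1: "s \<le> a" using sl by simp
  have "of_int l - 1 < log 2 s" unfolding l_def by linarith
  then have "2 powr (of_int l - 1) < 2 powr (log 2 s)" by simp
  moreover have "2 powr (of_int l - 1) = a / 2" unfolding a_def by (simp add: powr_diff)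
  ultimately have s2: "a / 2 < s" using sl by simp
  have "log 2 s \<le> log 2 (2 powr of_int L)" using s by (subst log_le_cancel_iff) auto
  then have "log 2 s \<le> of_int L" by simp
  then have lL: "l \<le> L" unfolding l_def by linarith
  have "x / a \<le> of_int m + 1" unfolding m_def by simp
  then have x1: "x \<le> a * (of_int m + 1)" using a by (simp add: divide_le_eq mult.commute)
  have "of_int m < x / a" unfolding m_def by linarith
  then have x2: "a * of_int m < x" using a by (simp add: less_divide_eq mult.commute)
  have "p \<in> strip m l" unfolding p strip_mem using x1 x2 s s1 by (simp add: di_mem a_def)
  moreover have "sigma (strip m l) / 2 < fst (snd p)" using s2 unfolding sigma_strip p a_def by simp
  ultimately show ?thesis using lL unfolding upper_half_def by blast
qed

lemma fst_meas_strip: "E \<in> strips L \<Longrightarrow> emeasure lborel (fst ` E) = ennreal (sigma E)"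
  by (auto elim!: strips_obtain simp: fst_strip di_meas sigma_strip)

lemma Q_sub: "Qcal L A \<subseteq> strips L" unfolding Qcal_def by blast
lemma N_sub: "Ncal L D \<subseteq> strips L" unfolding Ncal_def by blast

lemma Q_in_N: assumes "E \<in> Qcal L A" shows "E \<in> Ncal L (Qcal L A)"
proof -
  have E: "E \<in> strips L" using assms Q_sub by blast
  have "fst ` E \<inter> fst ` \<Union>(Qcal L A) = fst ` E" using assms by blast
  moreover have "emeasure lborel (fst ` E) / 2 \<le> emeasure lborel (fst ` E)"
  proof -
    have "emeasure lborel (fst ` E) / 2 = ennreal (sigma E / 2)"
      unfolding fst_meas_strip[OF E] using E
      by (auto elim!: strips_obtain simp: sigma_strip ennreal_divide_numeral)
    also have "\<dots> \<le> ennreal (sigma E)" using E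
      by (auto elim!: strips_obtain simp: sigma_strip intro!: ennreal_leI)
    finally show ?thesis unfolding fst_meas_strip[OF E] .
  qed
  ultimately show ?thesis unfolding Ncal_def using E by simp
qed

lemma N_mono: assumes "D1 \<subseteq> D2" "D2 \<subseteq> strips L" shows "Ncal L D1 \<subseteq> Ncal L D2"
proof
  fix E assume E: "E \<in> Ncal L D1"
  then have Es: "E \<in> strips L" by (rule N_sub[THEN subsetD])
  have "fst ` E \<inter> fst ` \<Union>D2 \<in> sets lborel"
    using strip_fst_sets[OF Es] fst_Union_sets[OF assms(2)] by blast
  then have "emeasure lborel (fst ` E \<inter> fst ` \<Union>D1) \<le> emeasure lborel (fst ` E \<inter> fst ` \<Union>D2)"
    using assms(1) by (intro emeasure_mono) auto
  then show "E \<in> Ncal L D2" using E unfolding Ncal_def by auto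
qed

lemma key1:
  assumes S: "S \<subseteq> strips L" "A \<subseteq> \<Union>S"
  shows "fst ` \<Union>(Qcal L A) \<subseteq> fst ` \<Union>S"
proof
  fix x assume "x \<in> fst ` \<Union>(Qcal L A)"
  then obtain E p where E: "E \<in> Qcal L A" "p \<in> E" "x = fst p" by blast
  obtain m l where e: "E = strip m l" using E(1) Q_sub strips_obtain by blast
  obtain q where q: "q \<in> upper_half E" "q \<in> A" using E(1) unfolding Qcal_def by blast
  obtain S' where S': "S' \<in> S" "q \<in> S'" using q S by blast
  obtain m' l' where e': "S' = strip m' l'" using S' S strips_obtain by blast
  have "2 powr of_int l / 2 < fst (snd q)" "q \<in> E" using q unfolding upper_half_def e sigma_strip by auto
  moreover have "fst (snd q) \<le> 2 powr of_int l'" using S' unfolding e' strip_mem by simp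
  ultimately have "2 powr of_int l / 2 < (2::real) powr of_int l'" by simp
  moreover have "2 powr of_int l / 2 = (2::real) powr (of_int l - 1)" by (simp add: powr_diff)
  ultimately have "(2::real) powr (of_int l - 1) < 2 powr of_int l'" by simp
  then have "of_int l - 1 < (of_int l' :: real)" by simp
  then have "l \<le> l'" by linarith
  moreover have "strip m l \<inter> strip m' l' \<noteq> {}" using \<open>q \<in> E\<close> S' e e' by blast
  ultimately have "E \<subseteq> S'" unfolding e e' by (rule strip_nest)
  then show "x \<in> fst ` \<Union>S" using E S' by blast
qed

lemma key3:
  assumes S: "S \<subseteq> strips L"
  shows "emeasure lborel (fst ` \<Union>S) \<le> sum_sigma S"
proof -
  have "fst ` \<Union>S = (\<Union>E\<in>S. fst ` E)" by auto
  moreover have "countable S" using S countable_strips countable_subset by blast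
  ultimately have "emeasure lborel (fst ` \<Union>S) \<le>
      (SUP F\<in>{F. finite F \<and> F \<subseteq> S}. \<Sum>E\<in>F. emeasure lborel (fst ` E))"
    using S strip_fst_sets by (auto intro!: emeasure_UN_le_SUP)
  also have "\<dots> = sum_sigma S" unfolding sum_sigma_def
  proof (rule SUP_cong)
    fix F assume "F \<in> {F. finite F \<and> F \<subseteq> S}"
    then show "(\<Sum>E\<in>F. emeasure lborel (fst ` E)) = (\<Sum>E\<in>F. ennreal (sigma E))"
      using S fst_meas_strip by (intro sum.cong) auto
  qed simp
  finally show ?thesis .
qed


lemma key2:
  assumes S: "S \<subseteq> strips L" "A \<subseteq> \<Union>S"
    and F: "finite F" "F \<subseteq> Mcal (Ncal L (Qcal L A))"
  shows "(\<Sum>E\<in>F. ennreal (sigma E)) \<le> 2 * emeasure lborel (fst ` \<Union>S)"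
proof -
  define U where "U = fst ` \<Union>(Qcal L A)"
  have FN: "F \<subseteq> Ncal L (Qcal L A)" using F Mcal_sub by blast
  have Fs: "F \<subseteq> strips L" using FN N_sub by blast
  have Us: "U \<in> sets lborel" unfolding U_def using Q_sub by (rule fst_Union_sets)
  have "(\<Sum>E\<in>F. ennreal (sigma E)) \<le> (\<Sum>E\<in>F. 2 * emeasure lborel (fst ` E \<inter> U))"
  proof (rule sum_mono)
    fix E assume "E \<in> F"
    then have "E \<in> Ncal L (Qcal L A)" "E \<in> strips L" using FN Fs by blast+
    then have "emeasure lborel (fst ` E) / 2 \<le> emeasure lborel (fst ` E \<inter> U)"
      unfolding Ncal_def U_def by blast
    then show "ennreal (sigma E) \<le> 2 * emeasure lborel (fst ` E \<inter> U)"
      using fst_meas_strip[OF \<open>E \<in> strips L\<close>] h2 by simp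
  qed
  also have "\<dots> = 2 * (\<Sum>E\<in>F. emeasure lborel (fst ` E \<inter> U))" by (simp add: sum_distrib_left)
  also have "(\<Sum>E\<in>F. emeasure lborel (fst ` E \<inter> U)) = emeasure lborel (\<Union>E\<in>F. fst ` E \<inter> U)"
  proof (rule sum_emeasure)
    show "(\<lambda>E. fst ` E \<inter> U) ` F \<subseteq> sets lborel" using Fs strip_fst_sets Us by blast
    show "disjoint_family_on (\<lambda>E. fst ` E \<inter> U) F"
      unfolding disjoint_family_on_def
    proof (intro ballI impI)
      fix E1 E2 assume "E1 \<in> F" "E2 \<in> F" "E1 \<noteq> E2"
      then have "fst ` E1 \<inter> fst ` E2 = {}" using F(2) by (intro Mcal_fst_disj[OF N_sub]) auto
      then show "(fst ` E1 \<inter> U) \<inter> (fst ` E2 \<inter> U) = {}" by blast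
    qed
  qed (rule F(1))
  also have "emeasure lborel (\<Union>E\<in>F. fst ` E \<inter> U) \<le> emeasure lborel (fst ` \<Union>S)"
  proof (rule emeasure_mono)
    show "(\<Union>E\<in>F. fst ` E \<inter> U) \<subseteq> fst ` \<Union>S" using key1[OF S] unfolding U_def by blast
    show "fst ` \<Union>S \<in> sets lborel" using S(1) by (rule fst_Union_sets)
  qed
  then have "2 * emeasure lborel (\<Union>E\<in>F. fst ` E \<inter> U) \<le> 2 * emeasure lborel (fst ` \<Union>S)"
    by (rule mult_left_mono) simp
  finally show ?thesis .
qed

theorem lemma4p5:
  fixes L :: int and \<Phi> :: real
  assumes "\<Phi> \<ge> 2"
  shows "covering_function L (\<lambda>A. Mcal (Ncal L (Qcal L A))) \<Phi>"
  unfolding covering_function_def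
proof (intro conjI allI impI)
  fix A assume AY: "A \<subseteq> Y L"
  define M where "M = Mcal (Ncal L (Qcal L A))"
  have UM: "\<Union>M = \<Union>(Ncal L (Qcal L A))" unfolding M_def by (rule Union_Mcal[OF N_sub])
  show "M \<subseteq> strips L" unfolding M_def using Mcal_sub N_sub by blast
  then show "pairwise disjnt M" unfolding M_def by (intro Mcal_disj[OF N_sub])
  show "A \<subseteq> \<Union>M"
  proof
    fix p assume "p \<in> A"
    then obtain m l where ml: "l \<le> L" "p \<in> upper_half (strip m l)" using cover_pt AY by blast
    then have "strip m l \<in> Qcal L A" unfolding Qcal_def using \<open>p \<in> A\<close> strips_iff by blast
    then have "strip m l \<in> Ncal L (Qcal L A)" by (rule Q_in_N)
    moreover have "p \<in> strip m l" using ml unfolding upper_half_def by blast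
    ultimately show "p \<in> \<Union>M" unfolding UM by blast
  qed
  have Ms: "M \<subseteq> strips L" unfolding M_def using Mcal_sub N_sub by blast
  have m1: "mu L (\<Union>M) \<le> sum_sigma M" unfolding mu_def by (rule INF_lower) (use Ms in blast)
  have m2: "sum_sigma M \<le> 2 * sum_sigma S" if S: "S \<subseteq> strips L" "A \<subseteq> \<Union>S" for S
    unfolding sum_sigma_def[of M]
  proof (rule SUP_least)
    fix F assume "F \<in> {F. finite F \<and> F \<subseteq> M}"
    then have "(\<Sum>E\<in>F. ennreal (sigma E)) \<le> 2 * emeasure lborel (fst ` \<Union>S)"
      using key2[OF S] unfolding M_def by blast
    also have "\<dots> \<le> 2 * sum_sigma S" using key3[OF S(1)] by (rule mult_left_mono) simp
    finally show "(\<Sum>E\<in>F. ennreal (sigma E)) \<le> 2 * sum_sigma S" .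
  qed
  have "mu L (\<Union>M) / 2 \<le> mu L A" unfolding mu_def[of L A]
  proof (rule INF_greatest)
    fix S assume "S \<in> {S. S \<subseteq> strips L \<and> A \<subseteq> \<Union>S}"
    then have "mu L (\<Union>M) \<le> 2 * sum_sigma S" using m1 m2 order_trans by blast
    then show "mu L (\<Union>M) / 2 \<le> sum_sigma S" by (rule h1)
  qed
  then have "mu L (\<Union>M) \<le> 2 * mu L A" by (rule h2)
  also have "\<dots> \<le> ennreal \<Phi> * mu L A"
  proof (rule mult_right_mono)
    show "2 \<le> ennreal \<Phi>" using assms ennreal_leI[of 2 \<Phi>] by simp
  qed simp
  finally show "mu L (\<Union>M) \<le> ennreal \<Phi> * mu L A" .
next
  fix A1 A2 :: "point set" assume A: "A1 \<subseteq> A2" "A2 \<subseteq> Y L"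
  have "Qcal L A1 \<subseteq> Qcal L A2" using A(1) unfolding Qcal_def by blast
  then have "Ncal L (Qcal L A1) \<subseteq> Ncal L (Qcal L A2)" using Q_sub by (rule N_mono)
  then show "\<Union>(Mcal (Ncal L (Qcal L A1))) \<subseteq> \<Union>(Mcal (Ncal L (Qcal L A2)))"
    using Union_Mcal[OF N_sub] by (metis Sup_subset_mono)
qed

end
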